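(* Let $d\ge2$, $n=3$, and let $f$ be a stable update function. For a configuration $\mathcal U^{(t)}$ of three opinions define $P^{(t)}:=\gamma_{12}^{(t)}+\gamma_{13}^{(t)}+\gamma_{23}^{(t)}$. If $\mathcal U^{(t+1)}$ is obtained from $\mathcal U^{(t)}$ by any single interaction, then $P^{(t+1)}\le P^{(t)}$.
   Context: Opinions are unit vectors in $\mathbb R^d$; a configuration is a tuple $(\vec u_1,\vec u_2,\vec u_3)$, $A_{ij}=\langle\vec u_i,\vec u_j\rangle$. An interaction $(i,j)$, $i\ne j$, replaces $\vec u_i$ by $\vec w/\|\vec w\|$ with $\vec w=\vec u_i+f(A_{ij})\vec u_j$, leaving other opinions unchanged. $f:[-1,1]\to\mathbb R$ is stable if continuous and $\operatorname{sign}f(A)=\operatorname{sign}A$ for all $A$. The angle is $\alpha(\vec u,\vec v)=\arccos\langle\vec u,\vec v\rangle\in[0,\pi]$ and the effective angle is $\gamma(\vec u,\vec v)=\min(\alpha(\vec u,\vec v),\pi-\alpha(\vec u,\vec v))$; $\gamma_{ij}^{(t)}=\gamma(\vec u_i^{(t)},\vec u_j^{(t)})$. *)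

theory Defs
  imports "HOL-Analysis.Analysis"
begin

definition stable :: "(real \<Rightarrow> real) \<Rightarrow> bool" where
  "stable f \<longleftrightarrow> continuous_on {-1..1} f \<and> (\<forall>A\<in>{-1..1}. sgn (f A) = sgn A)"

definition opinion_angle :: "real^'d \<Rightarrow> real^'d \<Rightarrow> real" where
  "opinion_angle u v = arccos (inner u v)"

definition eff_angle :: "real^'d \<Rightarrow> real^'d \<Rightarrow> real" where
  "eff_angle u v = min (opinion_angle u v) (pi - opinion_angle u v)"

definition interact :: "(real \<Rightarrow> real) \<Rightarrow> (nat \<Rightarrow> real^'d) \<Rightarrow> nat \<Rightarrow> nat \<Rightarrow> (nat \<Rightarrow> real^'d)" where
  "interact f U i j =
     (let w = U i + f (inner (U i) (U j)) *\<^sub>R U j in U(i := inverse (norm w) *\<^sub>R w))"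

definition potential3 :: "(nat \<Rightarrow> real^'d) \<Rightarrow> real" where
  "potential3 U = eff_angle (U 1) (U 2) + eff_angle (U 1) (U 3) + eff_angle (U 2) (U 3)"

end

theory Submission
  imports Defs
begin

lemma inner_unit_bounds:
  fixes x y :: "'a::real_inner"
  assumes "norm x = 1" "norm y = 1"
  shows "-1 \<le> inner x y" "inner x y \<le> 1"
  using Cauchy_Schwarz_ineq2[of x y] assms by auto

lemma cos_add_arccos:
  assumes "-1 \<le> p" "p \<le> 1" "-1 \<le> q" "q \<le> 1"
  shows "cos (arccos p + arccos q) = p*q - sqrt (1-p\<^sup>2) * sqrt (1-q\<^sup>2)"
  using assms by (simp add: cos_add sin_arccos)

lemma tri_alpha:
  fixes x y z :: "'a::real_inner"
  assumes nx: "norm x = 1" and ny: "norm y = 1" and nz: "norm z = 1"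
  shows "arccos (inner x z) \<le> arccos (inner x y) + arccos (inner y z)"
proof -
  define p where "p = inner x y"
  define q where "q = inner y z"
  have pb: "-1 \<le> p" "p \<le> 1" unfolding p_def using inner_unit_bounds[OF nx ny] by auto
  have qb: "-1 \<le> q" "q \<le> 1" unfolding q_def using inner_unit_bounds[OF ny nz] by auto
  have rb: "-1 \<le> inner x z" "inner x z \<le> 1" using inner_unit_bounds[OF nx nz] by auto
  show ?thesis
  proof (cases "arccos p + arccos q \<le> pi")
    case False
    then show ?thesis using arccos_ubound[OF rb] unfolding p_def q_def by linarith
  next
    case True
    have yy: "inner y y = 1" using ny by (simp add: power2_norm_eq_inner[symmetric])
    have xx: "inner x x = 1" using nx by (simp add: power2_norm_eq_inner[symmetric])
    have zz: "inner z z = 1" using nz by (simp add: power2_norm_eq_inner[symmetric])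
    define X where "X = x - p *\<^sub>R y"
    define Z where "Z = z - q *\<^sub>R y"
    have XZ: "inner X Z = inner x z - p*q"
      unfolding X_def Z_def using yy
      by (simp add: inner_diff_left inner_diff_right p_def q_def inner_commute algebra_simps)
    have XX: "inner X X = 1 - p\<^sup>2"
      unfolding X_def using yy xx
      by (simp add: inner_diff_left inner_diff_right p_def inner_commute algebra_simps power2_eq_square)
    have ZZ: "inner Z Z = 1 - q\<^sup>2"
      unfolding Z_def using yy zz
      by (simp add: inner_diff_left inner_diff_right q_def inner_commute algebra_simps power2_eq_square)
    have "norm X = sqrt (1 - p\<^sup>2)" using XX by (simp add: norm_eq_sqrt_inner)
    moreover have "norm Z = sqrt (1 - q\<^sup>2)" using ZZ by (simp add: norm_eq_sqrt_inner)
    ultimately have "\<bar>inner x z - p*q\<bar> \<le> sqrt (1-p\<^sup>2) * sqrt (1-q\<^sup>2)"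
      using Cauchy_Schwarz_ineq2[of X Z] XZ by simp
    hence le: "cos (arccos p + arccos q) \<le> inner x z"
      using cos_add_arccos[OF pb qb] by linarith
    have "arccos (inner x z) \<le> arccos (cos (arccos p + arccos q))"
      by (rule arccos_le_arccos) (use le rb in auto)
    also have "\<dots> = arccos p + arccos q"
      by (rule arccos_cos) (use True arccos_lbound pb qb in \<open>auto intro: add_nonneg_nonneg\<close>)
    finally show ?thesis unfolding p_def q_def .
  qed
qed


lemma eff_sym: "eff_angle x y = eff_angle y x"
  unfolding eff_angle_def opinion_angle_def by (simp add: inner_commute)

lemma eff_triangle:
  fixes x y z :: "real^'d"
  assumes nx: "norm x = 1" and ny: "norm y = 1" and nz: "norm z = 1"
  shows "eff_angle x z \<le> eff_angle x y + eff_angle y z"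
proof -
  have nmx: "norm (-x) = 1" and nmz: "norm (-z) = 1" using nx nz by auto
  have t1: "arccos (inner x z) \<le> arccos (inner x y) + arccos (inner y z)"
    using tri_alpha[OF nx ny nz] .
  have t2: "arccos (- inner x z) \<le> arccos (inner x y) + arccos (- inner y z)"
    using tri_alpha[OF nx ny nmz] by simp
  have t3: "arccos (- inner x z) \<le> arccos (- inner x y) + arccos (inner y z)"
    using tri_alpha[OF nmx ny nz] by simp
  have t4: "arccos (inner x z) \<le> arccos (- inner x y) + arccos (- inner y z)"
    using tri_alpha[OF nmx ny nmz] by simp
  have m1: "arccos (- inner x z) = pi - arccos (inner x z)"
    using inner_unit_bounds[OF nx nz] by (simp add: arccos_minus)
  have m2: "arccos (- inner x y) = pi - arccos (inner x y)"
    using inner_unit_bounds[OF nx ny] by (simp add: arccos_minus)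
  have m3: "arccos (- inner y z) = pi - arccos (inner y z)"
    using inner_unit_bounds[OF ny nz] by (simp add: arccos_minus)
  show ?thesis unfolding eff_angle_def opinion_angle_def
    using t1 t2 t3 t4 m1 m2 m3 by (simp add: min_def split: if_splits)
qed

lemma arc_lemma:
  fixes x v :: "real^'d"
  assumes nx: "norm x = 1" and nv: "norm v = 1" and a0: "0 \<le> inner x v"
    and c0: "0 < c"
  defines "w \<equiv> x + c *\<^sub>R v"
  defines "x' \<equiv> inverse (norm w) *\<^sub>R w"
  shows "arccos (inner x x') + arccos (inner x' v) \<le> arccos (inner x v)"
    and "norm x' = 1"
proof -
  define a where "a = inner x v"
  define N where "N = norm w"
  have xx: "inner x x = 1" using nx by (simp add: power2_norm_eq_inner[symmetric])
  have vv: "inner v v = 1" using nv by (simp add: power2_norm_eq_inner[symmetric])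
  have ab: "-1 \<le> a" "a \<le> 1" unfolding a_def using inner_unit_bounds[OF nx nv] by auto
  have a0': "0 \<le> a" using a0 a_def by simp
  have N2: "N\<^sup>2 = 1 + 2*c*a + c\<^sup>2"
    unfolding N_def power2_norm_eq_inner w_def using xx vv
    by (simp add: inner_add_left inner_add_right a_def inner_commute algebra_simps power2_eq_square)
  have Npos: "0 < N"
  proof -
    have "0 < N\<^sup>2" using N2 c0 a0' by (smt (verit) mult_nonneg_nonneg zero_less_power2)
    moreover have "0 \<le> N" unfolding N_def by simp
    ultimately show ?thesis by (metis less_eq_real_def power_zero_numeral order_less_irrefl)
  qed
  show nx': "norm x' = 1" unfolding x'_def using Npos N_def by simp
  have p: "inner x x' = (1 + c*a)/N"
    unfolding x'_def N_def[symmetric] using xx Npos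
    by (simp add: w_def inner_add_right a_def field_simps)
  have q: "inner x' v = (a + c)/N"
    unfolding x'_def N_def[symmetric] using vv Npos
    by (simp add: w_def inner_add_left a_def field_simps)
  define P where "P = (1 + c*a)/N"
  define Q where "Q = (a + c)/N"
  have Pb: "0 \<le> P" "P \<le> 1" using p inner_unit_bounds[OF nx nx'] Npos c0 a0'
    unfolding P_def by auto
  have Qb: "0 \<le> Q" "Q \<le> 1" using q inner_unit_bounds[OF nx' nv] Npos c0 a0'
    unfolding Q_def by auto
  define s where "s = sqrt (1 - a\<^sup>2)"
  have a21: "a\<^sup>2 \<le> 1" using a0' ab by (simp add: power_le_one)
  hence s2: "s\<^sup>2 = 1 - a\<^sup>2" unfolding s_def by simp
  have s0: "0 \<le> s" unfolding s_def using a21 by simp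
  have sP: "sqrt (1 - P\<^sup>2) = c * s/N"
  proof (rule real_sqrt_unique)
    show "0 \<le> c * s/N" using c0 s0 Npos by simp
    have e: "c\<^sup>2 * s\<^sup>2 = N\<^sup>2 - (1+c*a)\<^sup>2" unfolding s2 N2
      by (simp add: power2_eq_square algebra_simps)
    have "(c * s/N)\<^sup>2 = (c\<^sup>2 * s\<^sup>2)/N\<^sup>2" by (simp add: power_divide power_mult_distrib)
    also have "\<dots> = (N\<^sup>2 - (1+c*a)\<^sup>2)/N\<^sup>2" using e by simp
    also have "\<dots> = 1 - P\<^sup>2" using Npos by (simp add: P_def power_divide diff_divide_distrib)
    finally show "(c * s/N)\<^sup>2 = 1 - P\<^sup>2" .
  qed
  have sQ: "sqrt (1 - Q\<^sup>2) = s/N"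
  proof (rule real_sqrt_unique)
    show "0 \<le> s/N" using s0 Npos by simp
    have e: "s\<^sup>2 = N\<^sup>2 - (a+c)\<^sup>2" unfolding s2 N2
      by (simp add: power2_eq_square algebra_simps)
    have "(s/N)\<^sup>2 = (s\<^sup>2)/N\<^sup>2" by (simp add: power_divide)
    also have "\<dots> = (N\<^sup>2 - (a+c)\<^sup>2)/N\<^sup>2" using e by simp
    also have "\<dots> = 1 - Q\<^sup>2" using Npos by (simp add: Q_def power_divide diff_divide_distrib)
    finally show "(s/N)\<^sup>2 = 1 - Q\<^sup>2" .
  qed
  have "cos (arccos P + arccos Q) = P*Q - (c * s/N)*(s/N)"
    using cos_add_arccos[of P Q] Pb Qb sP sQ by simp
  also have "\<dots> = a"
  proof -
    have "P*Q - (c * s/N)*(s/N) = ((1+c*a)*(a+c) - c * s\<^sup>2)/N\<^sup>2"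
      unfolding P_def Q_def power2_eq_square by (simp add: diff_divide_distrib algebra_simps)
    also have "\<dots> = a*N\<^sup>2/N\<^sup>2" unfolding s2 N2 by (simp add: algebra_simps power2_eq_square)
    also have "\<dots> = a" using Npos by simp
    finally show ?thesis .
  qed
  finally have cs: "cos (arccos P + arccos Q) = a" .
  have "arccos P + arccos Q = arccos (cos (arccos P + arccos Q))"
    by (rule arccos_cos[symmetric])
      (use Pb Qb arccos_lbound arccos_le_pi2[of P] arccos_le_pi2[of Q] in auto)
  also have "\<dots> = arccos a" using cs by simp
  finally show "arccos (inner x x') + arccos (inner x' v) \<le> arccos (inner x v)"
    using p q P_def Q_def a_def by simp
qed


lemma step_case:
  fixes xi xj xk v :: "real^'d"
  assumes ni: "norm xi = 1" and nj: "norm xj = 1" and nk: "norm xk = 1"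
    and vdef: "v = s *\<^sub>R xj" and s: "s = 1 \<or> s = -1"
    and iv: "0 \<le> inner xi v" and c0: "0 < c"
  shows "eff_angle (inverse (norm (xi + c *\<^sub>R v)) *\<^sub>R (xi + c *\<^sub>R v)) xj
       + eff_angle (inverse (norm (xi + c *\<^sub>R v)) *\<^sub>R (xi + c *\<^sub>R v)) xk + eff_angle xj xk
     \<le> eff_angle xi xj + eff_angle xi xk + eff_angle xj xk"
proof -
  define x' where "x' = inverse (norm (xi + c *\<^sub>R v)) *\<^sub>R (xi + c *\<^sub>R v)"
  have nv: "norm v = 1" using vdef s nj by auto
  have arc: "arccos (inner xi x') + arccos (inner x' v) \<le> arccos (inner xi v)"
    and nx': "norm x' = 1"
    using arc_lemma[OF ni nv iv c0] unfolding x'_def by auto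
  have b1: "-1 \<le> inner x' xj" "inner x' xj \<le> 1" using inner_unit_bounds[OF nx' nj] by auto
  have b2: "-1 \<le> inner xi xj" "inner xi xj \<le> 1" using inner_unit_bounds[OF ni nj] by auto
  have e1: "eff_angle x' xj \<le> arccos (inner x' v)"
    using s
  proof
    assume "s = 1" thus ?thesis using vdef by (simp add: eff_angle_def opinion_angle_def)
  next
    assume "s = -1" thus ?thesis using vdef b1
      by (simp add: eff_angle_def opinion_angle_def arccos_minus)
  qed
  have e2: "eff_angle x' xi \<le> arccos (inner xi x')"
    by (simp add: eff_angle_def opinion_angle_def inner_commute)
  have half: "arccos (inner xi v) \<le> pi/2"
    using arccos_le_pi2[OF iv] inner_unit_bounds[OF ni nv] by simp
  have e3: "arccos (inner xi v) \<le> eff_angle xi xj"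
    using s
  proof
    assume "s = 1" thus ?thesis using vdef half by (simp add: eff_angle_def opinion_angle_def)
  next
    assume "s = -1" thus ?thesis using vdef b2 half
      by (simp add: eff_angle_def opinion_angle_def arccos_minus)
  qed
  have e4: "eff_angle x' xk \<le> eff_angle x' xi + eff_angle xi xk"
    using eff_triangle[OF nx' ni nk] .
  show ?thesis using e1 e2 e3 e4 arc unfolding x'_def[symmetric] by linarith
qed

lemma pot_perm:
  assumes "i \<in> {1,2,3}" "j \<in> {1,2,3}" "k \<in> {1,2,3::nat}" "i \<noteq> j" "i \<noteq> k" "j \<noteq> k"
  shows "potential3 U = eff_angle (U i) (U j) + eff_angle (U i) (U k) + eff_angle (U j) (U k)"
  using assms unfolding potential3_def
  by (auto simp: eff_sym[of "U 2" "U (Suc 0)"] eff_sym[of "U 3" "U (Suc 0)"] eff_sym[of "U 3" "U 2"])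

theorem mainTheorem17:
  fixes f :: "real \<Rightarrow> real" and U :: "nat \<Rightarrow> real^'d" and i j :: nat
  assumes "CARD('d) \<ge> 2"
    and "stable f"
    and "\<forall>k\<in>{1,2,3}. norm (U k) = 1"
    and "i \<in> {1,2,3}" and "j \<in> {1,2,3}" and "i \<noteq> j"
  shows "potential3 (interact f U i j) \<le> potential3 U"
proof -
  define k where "k = (if i \<noteq> 1 \<and> j \<noteq> 1 then 1 else if i \<noteq> 2 \<and> j \<noteq> 2 then 2 else (3::nat))"
  have k: "k \<in> {1,2,3::nat}" "k \<noteq> i" "k \<noteq> j"
    using assms(4,5,6) unfolding k_def by auto
  have ni: "norm (U i) = 1" and nj: "norm (U j) = 1" and nk: "norm (U k) = 1"
    using assms(3,4,5) k by auto
  define A where "A = inner (U i) (U j)"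
  have Ab: "A \<in> {-1..1}" using inner_unit_bounds[OF ni nj] A_def by auto
  have sg: "sgn (f A) = sgn A" using assms(2) Ab unfolding stable_def by auto
  define w where "w = U i + f A *\<^sub>R U j"
  define U' where "U' = interact f U i j"
  have U'i: "U' i = inverse (norm w) *\<^sub>R w"
    unfolding U'_def interact_def w_def A_def by (simp add: Let_def)
  have U'j: "U' j = U j" and U'k: "U' k = U k"
    unfolding U'_def interact_def using assms(6) k by (auto simp: Let_def)
  have P': "potential3 U' = eff_angle (U' i) (U j) + eff_angle (U' i) (U k) + eff_angle (U j) (U k)"
    using pot_perm[of i j k U'] assms k U'j U'k by auto
  have P: "potential3 U = eff_angle (U i) (U j) + eff_angle (U i) (U k) + eff_angle (U j) (U k)"
    using pot_perm[of i j k U] assms k by auto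
  show ?thesis
  proof (cases "A = 0")
    case True
    hence "f A = 0" using sg by (simp add: sgn_0_0)
    hence "w = U i" unfolding w_def by simp
    hence "U' i = U i" using U'i ni by simp
    thus ?thesis using P P' U'_def by simp
  next
    case False
    define s where "s = sgn A"
    define c where "c = \<bar>f A\<bar>"
    define v where "v = s *\<^sub>R U j"
    have s: "s = 1 \<or> s = -1" using False s_def by (auto simp: sgn_real_def)
    have fA: "f A = c * s" using sg unfolding c_def s_def
      by (metis sgn_mult_abs mult.commute)
    have c0: "0 < c" using False sg unfolding c_def by (auto simp: sgn_0_0)
    have wv: "w = U i + c *\<^sub>R v" unfolding w_def v_def fA by simp
    have iv: "0 \<le> inner (U i) v" unfolding v_def s_def using A_def
      by (simp add: sgn_real_def)
    have "potential3 U' \<le> potential3 U"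
      using step_case[OF ni nj nk v_def s iv c0] P P' U'i wv by simp
    thus ?thesis using U'_def by simp
  qed
qed

end
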